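(* Let $n\ge 1$ be an integer and let $U_{6n}=\langle a,b : a^{2n}=b^3=1,\ a^{-1}ba=b^{-1}\rangle$ (a group of order $6n$). Let $\Gamma_{U_{6n}}$ be its non-commuting graph. Then the spectrum of the distance matrix $D(\Gamma_{U_{6n}})$ (eigenvalues counted with multiplicity, multiplicities being added if two of the listed values coincide) consists of: (a) $-2$ with multiplicity $5n-4$; (b) $n-2$ with multiplicity $2$; (c) $(4n-2)+n\sqrt{6}$ and $(4n-2)-n\sqrt{6}$, each with multiplicity $1$.
   Context: For a finite non-abelian group $G$ with centre $Z(G)$, the non-commuting graph $\Gamma_G$ is the simple undirected graph with vertex set $G\setminus Z(G)$, in which two distinct vertices $u,v$ are adjacent if and only if $uv\ne vu$. For a connected graph $H$, $d_{uv}$ denotes the length of a shortest path between vertices $u$ and $v$, and the distance matrix $D(H)$ is the matrix whose $(u,v)$-entry is $d_{uv}$. *)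

theory Defs
  imports "HOL-Algebra.Generated_Groups" "Jordan_Normal_Form.Char_Poly"
begin

definition grp_centre :: "('g, 'm) monoid_scheme \<Rightarrow> 'g set" where
  "grp_centre G = {z \<in> carrier G. \<forall>x \<in> carrier G. x \<otimes>\<^bsub>G\<^esub> z = z \<otimes>\<^bsub>G\<^esub> x}"

definition nc_vertices :: "('g, 'm) monoid_scheme \<Rightarrow> 'g set" where
  "nc_vertices G = carrier G - grp_centre G"

definition nc_adj :: "('g, 'm) monoid_scheme \<Rightarrow> 'g \<Rightarrow> 'g \<Rightarrow> bool" where
  "nc_adj G u v \<longleftrightarrow> u \<in> nc_vertices G \<and> v \<in> nc_vertices G \<and> u \<noteq> v \<and>
     u \<otimes>\<^bsub>G\<^esub> v \<noteq> v \<otimes>\<^bsub>G\<^esub> u"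

definition nc_walk :: "('g, 'm) monoid_scheme \<Rightarrow> 'g list \<Rightarrow> bool" where
  "nc_walk G xs \<longleftrightarrow> xs \<noteq> [] \<and> set xs \<subseteq> nc_vertices G \<and>
     (\<forall>i. Suc i < length xs \<longrightarrow> nc_adj G (xs ! i) (xs ! Suc i))"

text \<open>Graph distance: length of a shortest walk (used only for connected graphs).\<close>
definition nc_dist :: "('g, 'm) monoid_scheme \<Rightarrow> 'g \<Rightarrow> 'g \<Rightarrow> nat" where
  "nc_dist G u v = (LEAST k. \<exists>xs. nc_walk G xs \<and> hd xs = u \<and> last xs = v \<and> length xs = Suc k)"

definition nc_dist_matrix :: "('g, 'm) monoid_scheme \<Rightarrow> nat \<Rightarrow> (nat \<Rightarrow> 'g) \<Rightarrow> real mat" where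
  "nc_dist_matrix G N f = mat N N (\<lambda>(i, j). real (nc_dist G (f i) (f j)))"

end

theory Submission
  imports Defs
begin

lemma sum_class:
  fixes g :: "nat \<Rightarrow> real" and N :: nat and cl :: "nat \<Rightarrow> nat"
  assumes "\<And>l. l < N \<Longrightarrow> cl l < (4::nat)"
  shows "(\<Sum>l = 0..<N. g (cl l)) = (\<Sum>c<4. real (card {l. l<N \<and> cl l = c}) * g c)"
proof -
  have im: "cl ` {0..<N} \<subseteq> {..<4}" using assms by auto
  have "(\<Sum>l = 0..<N. g (cl l)) = (\<Sum>c\<in>{..<4}. \<Sum>l\<in>{x \<in> {0..<N}. cl x = c}. g (cl l))"
    by (rule sum.group[symmetric, OF _ _ im]) auto
  also have "\<dots> = (\<Sum>c<4. real (card {l. l<N \<and> cl l = c}) * g c)"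
  proof (rule sum.cong[OF refl])
    fix c assume "c \<in> {..<(4::nat)}"
    have "(\<Sum>l\<in>{x \<in> {0..<N}. cl x = c}. g (cl l)) = (\<Sum>l\<in>{x \<in> {0..<N}. cl x = c}. g c)"
      by (rule sum.cong) auto
    also have "{x \<in> {0..<N}. cl x = c} = {l. l<N \<and> cl l = c}" by auto
    finally show "(\<Sum>l\<in>{x \<in> {0..<N}. cl x = c}. g (cl l)) = real (card {l. l<N \<and> cl l = c}) * g c"
      by simp
  qed
  finally show ?thesis .
qed

lemma sum_class_if:
  fixes x :: "nat \<Rightarrow> real" and N :: nat and cl :: "nat \<Rightarrow> nat"
  assumes "\<And>l. l < N \<Longrightarrow> cl l < (4::nat)" and "c < 4"
  shows "(\<Sum>l = 0..<N. (if cl l = c then x (cl l) else 0)) = real (card {l. l<N \<and> cl l = c}) * x c"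
  using sum_class[OF assms(1), where g = "\<lambda>d. if d = c then x d else 0"] assms(2)
  by (simp add: if_distrib cong: if_cong)

lemma mat_mult_entry:
  fixes f g :: "nat \<times> nat \<Rightarrow> real"
  assumes "k < N" "j < N"
  shows "(mat N N f * mat N N g) $$ (k,j) = (\<Sum>i=0..<N. f (k,i) * g (i,j))"
  using assms by (auto simp: scalar_prod_def intro!: sum.cong)

lemma sum4: "(\<Sum>c<(4::nat). h c) = h 0 + h 1 + h 2 + (h 3 :: real)"
  by (simp add: eval_nat_numeral)

lemma lt4: "(c::nat) < 4 \<Longrightarrow> c = 0 \<or> c = 1 \<or> c = 2 \<or> c = 3" by auto

definition pcol :: "real \<Rightarrow> nat \<Rightarrow> nat \<Rightarrow> real" where
 "pcol al e c = (if e = 0 then (if c = 0 then al else 1)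
   else if e = 1 then (if c = 0 then -al else 1)
   else if e = 2 then (if c = 1 then 1 else if c = 2 then -1 else 0)
   else (if c = 1 then 1 else if c = 3 then -1 else 0))"

definition qrow :: "real \<Rightarrow> real \<Rightarrow> nat \<Rightarrow> nat \<Rightarrow> real" where
 "qrow al n d c = (if d = 0 then (if c = 0 then 1/(4*n*al) else 1/(6*n))
   else if d = 1 then (if c = 0 then -1/(4*n*al) else 1/(6*n))
   else if d = 2 then (if c = 0 then 0 else 1/(3*n)) - (if c = 2 then 1/n else 0)
   else (if c = 0 then 0 else 1/(3*n)) - (if c = 3 then 1/n else 0))"

definition lamc :: "real \<Rightarrow> nat \<Rightarrow> real" where
 "lamc n e = (if e = 0 then 4*n-2+n*sqrt 6 else if e = 1 then 4*n-2-n*sqrt 6 else n-2)"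

lemma QP_rr:
  fixes m :: real
  assumes "m > 0" "d < 4" "e < 4" "al = sqrt 6 / 2"
  shows "(\<Sum>c<4. (if c = 0 then 2*m else m) * (qrow al m d c * pcol al e c)) = (if d = e then 1 else 0)"
proof -
  have "al \<noteq> 0" by (simp add: assms(4))
  then show ?thesis using lt4[OF assms(2)] lt4[OF assms(3)] assms(1)
    by (auto simp: sum4 qrow_def pcol_def field_simps)
qed

lemma DP_r:
  fixes m :: real
  assumes "m > 0" "d < 4" "e < 4" "al = sqrt 6 / 2"
  shows "(\<Sum>c<4. (if c = 0 then 2*m else m) * pcol al e c) + (if d = 0 then 2*m else m) * pcol al e d - 2 * pcol al e d
     = pcol al e d * lamc m e"
proof -
  have s6: "sqrt 6 * sqrt 6 = (6::real)" by simp
  show ?thesis using lt4[OF assms(2)] lt4[OF assms(3)] assms(1)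
    by (auto simp: sum4 lamc_def pcol_def assms(4) algebra_simps) 
qed

lemma prod_nn:
  fixes cl :: "nat \<Rightarrow> nat" and i k j r :: nat and s :: real
  shows "((if i = k then 1 else 0) - (if cl i = cl k then 1 / s else 0)) * ((if i = j then 1 else 0) - (if i = r then 1 else 0))
  = (if i = k \<and> i = j then 1 else 0)
              - (if i = k \<and> i = r then 1 else 0)
              - (if i = j \<and> cl i = cl k then 1 / s else 0)
              + (if i = r \<and> cl i = cl k then 1 / s else 0)"
  by (cases "i=k"; cases "i=j"; cases "i = r"; cases "cl i = cl k") simp_all

lemma sum_if_conj:
  fixes x :: "nat \<Rightarrow> real"
  shows "(\<Sum>i = 0..<N. if i = a \<and> P i then x i else 0) = (if a < N \<and> P a then x a else 0)"
proof -
  have "(\<lambda>i. if i = a \<and> P i then x i else (0::real)) = (\<lambda>i. if i = a then (if P a then x a else 0) else 0)"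
    by auto
  then show ?thesis by (simp only:) simp
qed

lemma sum_delta_mult:
  fixes f :: "nat \<Rightarrow> real"
  assumes "j < N"
  shows "(\<Sum>l = 0..<N. f l * (if l = j then c else 0)) = f j * c"
proof -
  have "(\<lambda>l. f l * (if l = j then c else 0)) = (\<lambda>l. if l = j then f j * c else 0)"
    by auto
  then show ?thesis using assms by (simp only:) simp
qed

lemma sum_two_delta:
  fixes f :: "nat \<Rightarrow> real"
  assumes "j < N" "r < N"
  shows "(\<Sum>l = 0..<N. f l * ((if l = j then 1 else 0) - (if l = r then 1 else 0))) = f j - f r"
proof -
  have "(\<lambda>l. f l * ((if l = j then 1 else 0) - (if l = r then 1 else 0))) =
     (\<lambda>l. (if l = j then f j else 0) - (if l = r then f r else 0))"
    by (auto simp: fun_eq_iff)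
  then show ?thesis using assms by (simp only:) (simp add: sum_subtractf)
qed

lemma dfun_split:
  fixes cl :: "nat \<Rightarrow> nat" and i l :: nat and p :: real
  shows "(if i = l then 0 else if cl i = cl l then 2 else 1) * p =
    p + (if cl l = cl i then p else 0) - 2 * (if l = i then p else 0)"
  by (cases "i = l"; cases "cl i = cl l") auto

lemma prod_nr:
  fixes cl :: "nat \<Rightarrow> nat" and i k :: nat and s :: real and p :: "nat \<Rightarrow> real"
  shows "((if i = k then 1 else 0) - (if cl i = cl k then 1 / s else 0)) * p (cl i) = 
  (if i = k then p (cl k) else 0) - (if cl i = cl k then p (cl i) / s else 0)"
  by (cases "i=k"; cases "cl i = cl k") (simp_all add: left_diff_distrib)

lemma charpoly_main:
  fixes N m :: nat and cl r :: "nat \<Rightarrow> nat"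
  assumes cl: "\<And>l. l < N \<Longrightarrow> cl l < 4"
   and r: "\<And>c. c < 4 \<Longrightarrow> r c < N \<and> cl (r c) = c"
   and sz: "\<And>c. c < 4 \<Longrightarrow> real (card {l. l<N \<and> cl l = c}) = (if c = 0 then 2*real m else real m)"
   and m: "m \<ge> 1"
  shows "char_poly (mat N N (\<lambda>(i,j). if i = j then 0 else if cl i = cl j then 2 else 1)) =
    [:-(4*real m-2+m*sqrt 6),1:] * [:-(4*real m-2-m*sqrt 6),1:] * [:-(real m-2),1:]^2 * [:2,1:]^(N-4)"
proof -
  define al :: real where "al = sqrt 6 / 2"
  define isrep where "isrep i \<longleftrightarrow> i = r (cl i)" for i
  define sz' :: "nat \<Rightarrow> real" where "sz' c = (if c = 0 then 2*real m else real m)" for c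
  define D :: "real mat" where "D = mat N N (\<lambda>(i,j). if i = j then 0 else if cl i = cl j then 2 else 1)"
  define pf where "pf = (\<lambda>(i,j). if isrep j then pcol al (cl j) (cl i)
      else (if i = j then 1 else 0) - (if i = r (cl j) then 1 else (0::real)))"
  define qf where "qf = (\<lambda>(k,i). if isrep k then qrow al m (cl k) (cl i)
      else (if i = k then 1 else 0) - (if cl i = cl k then 1 / sz' (cl k) else (0::real)))"
  define lam where "lam j = (if isrep j then lamc m (cl j) else -2)" for j
  define P where "P = mat N N pf"
  define Q where "Q = mat N N qf"
  define Dg where "Dg = mat N N (\<lambda>(i,j). if i = j then lam j else 0)"
  have mpos: "real m > 0" using m by simp
  have szpos: "sz' c > 0" for c using mpos by (simp add: sz'_def)
  have sz2: "c < 4 \<Longrightarrow> real (card {l. l<N \<and> cl l = c}) = sz' c" for c using sz by (simp add: sz'_def)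
  have repcl: "isrep k \<Longrightarrow> isrep j \<Longrightarrow> k = j \<longleftrightarrow> cl k = cl j" for k j
    unfolding isrep_def by metis
  have nonrep_ne: "\<not> isrep k \<Longrightarrow> k \<noteq> r (cl j)" if "j < N" for k j
    using r[OF cl[OF that]] unfolding isrep_def by metis
  have QP: "Q * P = 1\<^sub>m N"
  proof (rule eq_matI)
    fix k j assume kj: "k < dim_row (1\<^sub>m N :: real mat)" "j < dim_col (1\<^sub>m N :: real mat)"
    then have k: "k < N" and j: "j < N" by auto
    have e: "(Q * P) $$ (k,j) = (\<Sum>i=0..<N. qf (k,i) * pf (i,j))"
      unfolding P_def Q_def by (rule mat_mult_entry[OF k j])
    have "(\<Sum>i=0..<N. qf (k,i) * pf (i,j)) = (if k = j then 1 else 0)"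
    proof (cases "isrep k")
      case rk: True
      show ?thesis
      proof (cases "isrep j")
        case rj: True
        have "(\<Sum>i=0..<N. qf (k,i) * pf (i,j)) = (\<Sum>i=0..<N. (\<lambda>c. qrow al m (cl k) c * pcol al (cl j) c) (cl i))"
          using rk rj by (simp add: qf_def pf_def)
        also have "\<dots> = (\<Sum>c<4. real (card {l. l<N \<and> cl l = c}) * (qrow al m (cl k) c * pcol al (cl j) c))"
          by (rule sum_class[OF cl])
        also have "\<dots> = (\<Sum>c<4. (if c = 0 then 2*real m else real m) * (qrow al m (cl k) c * pcol al (cl j) c))"
          by (rule sum.cong) (auto simp: sz)
        also have "\<dots> = (if cl k = cl j then 1 else 0)"
          by (rule QP_rr[OF mpos cl[OF k] cl[OF j] al_def])
        finally show ?thesis using repcl[OF rk rj] by simp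
      next
        case rj: False
        have "(\<Sum>i=0..<N. qf (k,i) * pf (i,j)) = (\<Sum>i=0..<N. (if i = j then qrow al m (cl k) (cl j) else 0)
              - (if i = r (cl j) then qrow al m (cl k) (cl (r (cl j))) else 0))"
          using rk rj by (intro sum.cong) (auto simp: qf_def pf_def)
        also have "\<dots> = 0"
          using j r[OF cl[OF j]] by (simp add: sum_subtractf)
        finally show ?thesis using rk rj by auto
      qed
    next
      case rk: False
      show ?thesis
      proof (cases "isrep j")
        case rj: True
        let ?p = "pcol al (cl j)"
        have "(\<Sum>i=0..<N. qf (k,i) * pf (i,j)) = (\<Sum>i=0..<N. (if i = k then ?p (cl k) else 0)
              - (if cl i = cl k then ?p (cl i) / sz' (cl k) else 0))"
          apply (intro sum.cong refl)
          subgoal for i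
          proof -
            have q: "qf (k,i) = (if i = k then 1 else 0) - (if cl i = cl k then 1 / sz' (cl k) else 0)"
              using rk by (simp add: qf_def)
            have p: "pf (i,j) = ?p (cl i)" using rj by (simp add: pf_def)
            show ?thesis unfolding q p by (rule prod_nr)
          qed
          done
        also have "\<dots> = ?p (cl k) - (\<Sum>i=0..<N. (if cl i = cl k then ?p (cl i) / sz' (cl k) else 0))"
          using k by (simp add: sum_subtractf)
        also have "(\<Sum>i=0..<N. (if cl i = cl k then ?p (cl i) / sz' (cl k) else 0)) = 
           real (card {l. l<N \<and> cl l = cl k}) * (?p (cl k) / sz' (cl k))"
          by (rule sum_class_if[OF cl cl[OF k], where x = "\<lambda>c. ?p c / sz' (cl k)"])
        also have "\<dots> = ?p (cl k)" using sz2[OF cl[OF k]] szpos[of "cl k"] by simp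
        finally show ?thesis using rk rj by auto
      next
        case rj: False
        have "(\<Sum>i=0..<N. qf (k,i) * pf (i,j)) = (\<Sum>i=0..<N. (if i = k \<and> i = j then 1 else 0)
              - (if i = k \<and> i = r (cl j) then 1 else 0)
              - (if i = j \<and> cl i = cl k then 1 / sz' (cl k) else 0)
              + (if i = r (cl j) \<and> cl i = cl k then 1 / sz' (cl k) else 0))"
          apply (intro sum.cong refl)
          subgoal for i
          proof -
            have q: "qf (k,i) = (if i = k then 1 else 0) - (if cl i = cl k then 1 / sz' (cl k) else 0)"
              using rk by (simp add: qf_def)
            have p: "pf (i,j) = (if i = j then 1 else 0) - (if i = r (cl j) then 1 else 0)" using rj by (simp add: pf_def)
            show ?thesis unfolding q p by (rule prod_nn)
          qed
          done
        also have "\<dots> = (if k = j then 1 else 0)"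
          using j k nonrep_ne[OF j rk] r[OF cl[OF j]] by (simp add: sum.distrib sum_subtractf sum_if_conj)
        finally show ?thesis .
      qed
    qed
    then show "(Q * P) $$ (k,j) = 1\<^sub>m N $$ (k,j)" using e k j by simp
  qed (auto simp: P_def Q_def)
  have Pc: "P \<in> carrier_mat N N" and Qc: "Q \<in> carrier_mat N N" and Dc: "D \<in> carrier_mat N N"
    and Dgc: "Dg \<in> carrier_mat N N"
    by (auto simp: P_def Q_def D_def Dg_def)
  have DP: "D * P = P * Dg"
  proof (rule eq_matI)
    fix i j assume ij: "i < dim_row (P * Dg)" "j < dim_col (P * Dg)"
    then have i: "i < N" and j: "j < N" by (auto simp: P_def Dg_def)
    have rhs: "(P * Dg) $$ (i,j) = pf (i,j) * lam j"
      unfolding P_def Dg_def using i j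
      by (simp add: mat_mult_entry[OF i j] sum_delta_mult[OF j, where f = "\<lambda>l. pf (i,l)"])
    have lhs: "(D * P) $$ (i,j) = (\<Sum>l=0..<N. (if i = l then 0 else if cl i = cl l then 2 else 1) * pf (l,j))"
      unfolding P_def D_def by (subst mat_mult_entry[OF i j]) simp
    show "(D * P) $$ (i,j) = (P * Dg) $$ (i,j)"
    proof (cases "isrep j")
      case rj: True
      let ?p = "pcol al (cl j)"
      have "(D * P) $$ (i,j) = (\<Sum>l=0..<N. ?p (cl l) + (if cl l = cl i then ?p (cl l) else 0)
          - 2 * (if l = i then ?p (cl l) else 0))"
        unfolding lhs using rj by (intro sum.cong refl) (simp add: pf_def dfun_split)
      also have "\<dots> = (\<Sum>l=0..<N. ?p (cl l)) + (\<Sum>l=0..<N. (if cl l = cl i then ?p (cl l) else 0))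
          - 2 * ?p (cl i)"
        using i by (simp add: sum.distrib sum_subtractf sum_distrib_left[symmetric])
      also have "(\<Sum>l=0..<N. ?p (cl l)) = (\<Sum>c<4. real (card {l. l<N \<and> cl l = c}) * ?p c)"
        by (rule sum_class[OF cl])
      also have "\<dots> = (\<Sum>c<4. (if c = 0 then 2*real m else real m) * ?p c)"
        by (rule sum.cong) (auto simp: sz)
      also have "(\<Sum>l=0..<N. (if cl l = cl i then ?p (cl l) else 0)) = real (card {l. l<N \<and> cl l = cl i}) * ?p (cl i)"
        by (rule sum_class_if[OF cl cl[OF i]])
      also have "real (card {l. l<N \<and> cl l = cl i}) = (if cl i = 0 then 2*real m else real m)"
        using sz[OF cl[OF i]] .
      also have "(\<Sum>c<4. (if c = 0 then 2*real m else real m) * ?p c) + (if cl i = 0 then 2*real m else real m) * ?p (cl i)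
          - 2 * ?p (cl i) = ?p (cl i) * lamc m (cl j)"
        by (rule DP_r[OF mpos cl[OF i] cl[OF j] al_def])
      also have "\<dots> = (P * Dg) $$ (i,j)" unfolding rhs using rj by (simp add: pf_def lam_def)
      finally show ?thesis .
    next
      case rj: False
      have rjN: "r (cl j) < N" and clr: "cl (r (cl j)) = cl j" using r[OF cl[OF j]] by auto
      have jne: "j \<noteq> r (cl j)" using rj unfolding isrep_def by auto
      have "(D * P) $$ (i,j) = (\<Sum>l=0..<N. (if i = l then 0 else if cl i = cl l then 2 else 1) *
           ((if l = j then 1 else 0) - (if l = r (cl j) then 1 else 0)))"
        unfolding lhs using rj by (intro sum.cong refl) (simp add: pf_def)
      also have "\<dots> = (if i = j then 0 else if cl i = cl j then 2 else 1) - (if i = r (cl j) then 0 else if cl i = cl (r (cl j)) then 2 else 1)"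
        by (rule sum_two_delta[OF j rjN])
      also have "\<dots> = pf (i,j) * lam j"
        using rj clr jne by (cases "i = j"; cases "i = r (cl j)") (auto simp: pf_def lam_def)
      finally show ?thesis using rhs by simp
    qed
  qed (auto simp: P_def D_def Dg_def)
  have PQ: "P * Q = 1\<^sub>m N" by (rule mat_mult_left_right_inverse[OF Qc Pc QP])
  have DPDQ: "D = P * Dg * Q"
  proof -
    have "D = D * (P * Q)" using Dc by (simp add: PQ)
    also have "\<dots> = (D * P) * Q" using Dc Pc Qc by (simp add: assoc_mult_mat)
    finally show ?thesis by (simp add: DP)
  qed
  have sim: "similar_mat D Dg"
    unfolding similar_mat_def similar_mat_wit_def
    using Pc Qc Dc Dgc PQ QP DPDQ by (intro exI[of _ P] exI[of _ Q]) (auto simp: D_def)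
  have ut: "upper_triangular Dg" unfolding upper_triangular_def Dg_def by auto
  have "char_poly D = char_poly Dg" by (rule char_poly_similar[OF sim])
  also have "\<dots> = (\<Prod>a\<leftarrow>diag_mat Dg. [:- a, 1:])" by (rule char_poly_upper_triangular[OF Dgc ut])
  also have "diag_mat Dg = map lam [0..<N]" unfolding diag_mat_def Dg_def by auto
  also have "(\<Prod>a\<leftarrow>map lam [0..<N]. [:- a, 1:]) = (\<Prod>i\<in>{0..<N}. [:- lam i, 1:])"
    using prod.distinct_set_conv_list[of "[0..<N]" "\<lambda>i. [:- lam i, 1:]"] by (simp add: o_def)
  also have "\<dots> = (\<Prod>i\<in>{0..<N} - r ` {..<4}. [:- lam i, 1:]) * (\<Prod>i\<in>r ` {..<4}. [:- lam i, 1:])"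
    by (rule prod.subset_diff) (use r in auto)
  also have "(\<Prod>i\<in>{0..<N} - r ` {..<4}. [:- lam i, 1:]) = (\<Prod>i\<in>{0..<N} - r ` {..<4}. [:2, 1:])"
  proof (rule prod.cong[OF refl])
    fix i assume "i \<in> {0..<N} - r ` {..<4}"
    then have "\<not> isrep i" unfolding isrep_def using cl by auto
    then show "[:- lam i, 1:] = [:2, 1:]" by (simp add: lam_def)
  qed
  also have "\<dots> = [:2, 1:] ^ (N - 4)"
  proof -
    have inj: "inj_on r {..<4}" using r by (metis inj_onI lessThan_iff)
    have "card ({0..<N} - r ` {..<4}) = N - 4"
      using r inj by (subst card_Diff_subset) (auto simp: card_image)
    then show ?thesis by simp
  qed
  also have "(\<Prod>i\<in>r ` {..<4}. [:- lam i, 1:]) = [:- lam (r 0), 1:] * [:- lam (r 1), 1:] * [:- lam (r 2), 1:] * [:- lam (r 3), 1:]"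
  proof -
    have d: "r a \<noteq> r b" if "a < 4" "b < 4" "a \<noteq> b" for a b using r that by metis
    have "r ` {..<4} = {r 0, r 1, r 2, r 3}" by (auto simp: eval_nat_numeral lessThan_Suc)
    moreover have "(\<Prod>i\<in>{r 0, r 1, r 2, r 3}. g i) = g (r 0) * g (r 1) * g (r 2) * g (r 3)"
      for g :: "nat \<Rightarrow> real poly" using d by (simp add: mult.assoc)
    ultimately show ?thesis by simp
  qed
  finally have cp: "char_poly D = [:2, 1:] ^ (N - 4) * ([:- lam (r 0), 1:] * [:- lam (r 1), 1:] * [:- lam (r 2), 1:] * [:- lam (r 3), 1:])" .
  have lr: "lam (r c) = lamc m c" if "c < 4" for c
    using r[OF that] unfolding lam_def isrep_def by simp
  have l0: "lam (r 0) = 4*real m-2+m*sqrt 6" using lr[of 0] by (simp add: lamc_def)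
  have l1: "lam (r 1) = 4*real m-2-m*sqrt 6" using lr[of 1] by (simp add: lamc_def)
  have l2: "lam (r 2) = real m-2" using lr[of 2] by (simp add: lamc_def)
  have l3: "lam (r 3) = real m-2" using lr[of 3] by (simp add: lamc_def)
  show ?thesis unfolding D_def[symmetric] cp l0 l1 l2 l3
    by (simp only: power2_eq_square mult_ac)
qed

locale u6n = group G for G (structure) +
  fixes a b :: 'a and n :: nat
  assumes n1: "n \<ge> 1" and a: "a \<in> carrier G" and b: "b \<in> carrier G"
   and gen: "carrier G = generate G {a, b}"
   and an: "a [^] (2 * n) = \<one>" and b3: "b [^] (3::nat) = \<one>"
   and rel: "inv a \<otimes> b \<otimes> a = inv b"
   and fin: "finite (carrier G)" and cardG: "card (carrier G) = 6 * n"
begin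

definition e :: "nat \<times> nat \<Rightarrow> 'a" where "e p = a [^] fst p \<otimes> b [^] snd p"

lemma e_closed[simp]: "e p \<in> carrier G" unfolding e_def using a b by simp

lemma invb: "inv b = b [^] (2::nat)"
proof (rule inv_equality)
  have "b [^] (2::nat) \<otimes> b = b [^] (3::nat)" using b by (simp add: numeral_eq_Suc)
  then show "b [^] (2::nat) \<otimes> b = \<one>" using b3 by simp
qed (use b in auto)

lemma ba: "b \<otimes> a = a \<otimes> b [^] (2::nat)"
proof -
  have "a \<otimes> (inv a \<otimes> b \<otimes> a) = a \<otimes> inv b" using rel by simp
  then show ?thesis using a b by (simp add: m_assoc[symmetric] invb)
qed

lemma bja: "b [^] (j::nat) \<otimes> a = a \<otimes> b [^] (2 * j)"
proof (induction j)
  case 0 then show ?case using a by simp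
next
  case (Suc j)
  have "b [^] Suc j \<otimes> a = b [^] j \<otimes> (b \<otimes> a)" using a b by (simp add: m_assoc)
  also have "\<dots> = (b [^] j \<otimes> a) \<otimes> b [^] (2::nat)" using a b by (simp add: ba m_assoc)
  also have "\<dots> = a \<otimes> (b [^] (2 * j) \<otimes> b [^] (2::nat))" using a b by (simp add: Suc m_assoc)
  also have "\<dots> = a \<otimes> b [^] (2 * Suc j)" using b by (simp add: nat_pow_mult)
  finally show ?case .
qed

lemma bjam: "b [^] (j::nat) \<otimes> a [^] (m::nat) = a [^] m \<otimes> b [^] (j * 2 ^ m)"
proof (induction m arbitrary: j)
  case 0 then show ?case using b by simp
next
  case (Suc m)
  have "b [^] j \<otimes> a [^] Suc m = (b [^] j \<otimes> a [^] m) \<otimes> a" using a b by (simp add: m_assoc)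
  also have "\<dots> = a [^] m \<otimes> (b [^] (j * 2 ^ m) \<otimes> a)" using a b by (simp add: Suc m_assoc)
  also have "\<dots> = a [^] Suc m \<otimes> b [^] (j * 2 ^ Suc m)" using a b by (simp add: bja m_assoc mult_ac)
  finally show ?case .
qed

lemma pow_mod_gen: "x \<in> carrier G \<Longrightarrow> x [^] (q::nat) = \<one> \<Longrightarrow> x [^] (k::nat) = x [^] (k mod q)"
proof -
  assume x: "x \<in> carrier G" and q: "x [^] q = \<one>"
  have "x [^] k = x [^] (q * (k div q) + k mod q)" by simp
  also have "\<dots> = (x [^] q) [^] (k div q) \<otimes> x [^] (k mod q)" using x by (simp add: nat_pow_mult nat_pow_pow)
  also have "\<dots> = x [^] (k mod q)" using q x by simp
  finally show ?thesis .
qed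

lemma amod: "a [^] (k::nat) = a [^] (k mod (2*n))" using pow_mod_gen[OF a an] .
lemma bmod: "b [^] (k::nat) = b [^] (k mod 3)" using pow_mod_gen[OF b b3] .

lemma emul: "e (k,j) \<otimes> e (m,i) = a [^] (k + m) \<otimes> b [^] (j * 2 ^ m + i)"
proof -
  have "e (k,j) \<otimes> e (m,i) = a [^] k \<otimes> (b [^] j \<otimes> a [^] m) \<otimes> b [^] i"
    unfolding e_def using a b by (simp add: m_assoc)
  also have "\<dots> = a [^] k \<otimes> (a [^] m \<otimes> b [^] (j * 2 ^ m)) \<otimes> b [^] i"
    by (simp add: bjam)
  also have "\<dots> = (a [^] k \<otimes> a [^] m) \<otimes> (b [^] (j * 2 ^ m) \<otimes> b [^] i)"
    using a b by (simp add: m_assoc)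
  also have "\<dots> = a [^] (k + m) \<otimes> b [^] (j * 2 ^ m + i)"
    using a b by (simp add: nat_pow_mult)
  finally show ?thesis .
qed

definition D0 where "D0 = {..<2*n} \<times> {..<(3::nat)}"

lemma emul_D0: "e (k,j) \<otimes> e (m,i) = e ((k + m) mod (2*n), (j * 2 ^ m + i) mod 3)"
proof -
  have "e (k,j) \<otimes> e (m,i) = a [^] (k + m) \<otimes> b [^] (j * 2 ^ m + i)" by (rule emul)
  also have "\<dots> = a [^] ((k + m) mod (2*n)) \<otimes> b [^] ((j * 2 ^ m + i) mod 3)"
    by (simp only: amod[of "k+m"] bmod[of "j * 2 ^ m + i"])
  finally show ?thesis unfolding e_def by simp
qed

lemma gen_sub: "carrier G \<subseteq> e ` D0"
proof
  fix x assume "x \<in> carrier G"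
  then have "x \<in> generate G {a, b}" using gen by simp
  then show "x \<in> e ` D0"
  proof (induction rule: generate.induct)
    case one
    have "e (0,0) = \<one>" unfolding e_def by simp
    moreover have "(0,0) \<in> D0" unfolding D0_def using n1 by auto
    ultimately show ?case by (metis image_eqI)
  next
    case (incl h)
    then show ?case
    proof
      assume "h = a"
      moreover have "e (1,0) = a" unfolding e_def using a by simp
      moreover have "(1,0) \<in> D0" unfolding D0_def using n1 by auto
      ultimately show ?case by (metis image_eqI)
    next
      assume "h \<in> {b}"
      then have "h = b" by simp
      moreover have "e (0,1) = b" unfolding e_def using b by simp
      moreover have "(0,1) \<in> D0" unfolding D0_def using n1 by auto
      ultimately show ?case by (metis image_eqI)
    qed
  next
    case (inv h)
    then show ?case
    proof
      assume "h = a"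
      have s: "Suc (2*n-1) = 2*n" using n1 by simp
      have "a [^] (2*n - 1) \<otimes> a = a [^] Suc (2*n-1)" by simp
      also have "\<dots> = \<one>" unfolding s by (rule an)
      finally have "a [^] (2*n - 1) \<otimes> a = \<one>" .
      then have "inv a = a [^] (2*n - 1)" using a by (intro inv_equality) auto
      moreover have "e (2*n-1,0) = a [^] (2*n - 1)" unfolding e_def using a by simp
      moreover have "(2*n-1,0) \<in> D0" unfolding D0_def using n1 by auto
      ultimately show ?case using \<open>h = a\<close> by (metis image_eqI)
    next
      assume "h \<in> {b}"
      then have "h = b" by simp
      moreover have "e (0,2) = b [^] (2::nat)" unfolding e_def using b by simp
      moreover have "(0,2) \<in> D0" unfolding D0_def using n1 by auto
      ultimately show ?case using invb by (metis image_eqI)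
    qed
  next
    case (eng h1 h2)
    then obtain k j m i where "h1 = e (k,j)" "h2 = e (m,i)" by auto
    then have "h1 \<otimes> h2 = e ((k + m) mod (2*n), (j * 2 ^ m + i) mod 3)" by (simp add: emul_D0)
    moreover have "((k + m) mod (2*n), (j * 2 ^ m + i) mod 3) \<in> D0" unfolding D0_def using n1 by auto
    ultimately show ?case by (metis image_eqI)
  qed
qed

lemma e_D0: "e ` D0 = carrier G" using gen_sub by auto

lemma card_D0: "card D0 = 6 * n" unfolding D0_def by (simp add: card_cartesian_product)

lemma e_inj: "inj_on e D0"
proof (rule eq_card_imp_inj_on)
  show "finite D0" unfolding D0_def by simp
  show "card (e ` D0) = card D0" using e_D0 cardG card_D0 by simp
qed

lemma e_bij: "bij_betw e D0 (carrier G)" using e_inj e_D0 by (simp add: bij_betw_def)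

definition pr where "pr x = the_inv_into D0 e x"

lemma pr: "x \<in> carrier G \<Longrightarrow> pr x \<in> D0 \<and> e (pr x) = x"
  unfolding pr_def using e_inj e_D0 by (metis f_the_inv_into_f the_inv_into_into subset_refl)

lemma pr_e: "p \<in> D0 \<Longrightarrow> pr (e p) = p"
  unfolding pr_def using e_inj by (rule the_inv_into_f_f)

lemma pow2_mod3: "(2::nat) ^ m mod 3 = (if even m then 1 else 2)"
proof (induction m)
  case 0 then show ?case by simp
next
  case (Suc m)
  have "(2::nat) ^ Suc m mod 3 = (2 * (2 ^ m mod 3)) mod 3" by (simp add: mod_mult_right_eq)
  then show ?case using Suc by auto
qed

definition sg :: "nat \<Rightarrow> nat" where "sg m = (if even m then 1 else 2)"

lemma comm_pairs:
  assumes "(k,j) \<in> D0" "(m,i) \<in> D0"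
  shows "e (k,j) \<otimes> e (m,i) = e (m,i) \<otimes> e (k,j) \<longleftrightarrow> (j * sg m + i) mod 3 = (i * sg k + j) mod 3"
proof -
  have h: "(x * 2 ^ y + z) mod 3 = (x * sg y + z) mod 3" for x y z :: nat
  proof -
    have "(x * 2 ^ y + z) mod 3 = ((x * (2 ^ y mod 3)) mod 3 + z) mod 3" by (simp add: mod_add_left_eq mod_mult_right_eq)
    also have "\<dots> = (x * sg y + z) mod 3" by (simp add: pow2_mod3 sg_def mod_add_left_eq)
    finally show ?thesis .
  qed
  have "e (k,j) \<otimes> e (m,i) = e (m,i) \<otimes> e (k,j) \<longleftrightarrow>
     e ((k + m) mod (2*n), (j * 2 ^ m + i) mod 3) = e ((m + k) mod (2*n), (i * 2 ^ k + j) mod 3)"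
    by (simp add: emul_D0)
  also have "\<dots> \<longleftrightarrow> ((k + m) mod (2*n), (j * 2 ^ m + i) mod 3) = ((m + k) mod (2*n), (i * 2 ^ k + j) mod 3)"
    using n1 by (intro inj_on_eq_iff[OF e_inj]) (auto simp: D0_def)
  also have "\<dots> \<longleftrightarrow> (j * 2 ^ m + i) mod 3 = (i * 2 ^ k + j) mod 3" by (simp add: add.commute)
  also have "(j * 2 ^ m + i) mod 3 = (j * sg m + i) mod 3" by (rule h)
  also have "(i * 2 ^ k + j) mod 3 = (i * sg k + j) mod 3" by (rule h)
  finally show ?thesis .
qed

definition clsp :: "nat \<times> nat \<Rightarrow> nat" where "clsp p = (if even (fst p) then 0 else 1 + snd p)"
definition cls where "cls x = clsp (pr x)"
definition ncp :: "nat \<times> nat \<Rightarrow> bool" where "ncp p \<longleftrightarrow> \<not> (even (fst p) \<and> snd p = 0)"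

lemma centre_iff:
  assumes "p \<in> D0"
  shows "e p \<in> grp_centre G \<longleftrightarrow> \<not> ncp p"
proof -
  obtain k j where p: "p = (k,j)" by (cases p)
  have j3: "j < 3" and k: "k < 2*n" using assms p by (auto simp: D0_def)
  show ?thesis
  proof
    assume c: "e p \<in> grp_centre G"
    show "\<not> ncp p"
    proof
      assume nc: "ncp p"
      show False
      proof (cases "even k")
        case True
        then have "j \<noteq> 0" using nc p by (simp add: ncp_def)
        have "(1,0) \<in> D0" using n1 by (auto simp: D0_def)
        then have "e (1,0) \<otimes> e (k,j) = e (k,j) \<otimes> e (1,0)" using c p by (simp add: grp_centre_def)
        then have "(0 * sg k + j) mod 3 = (j * sg 1 + 0) mod 3"
          using comm_pairs[OF \<open>(1,0) \<in> D0\<close>, of k j] assms p by simp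
        moreover have "j = 1 \<or> j = 2" using j3 \<open>j \<noteq> 0\<close> by auto
        ultimately show False using True by (auto simp: sg_def)
      next
        case False
        have "(0,1) \<in> D0" using n1 by (auto simp: D0_def)
        then have "e (0,1) \<otimes> e (k,j) = e (k,j) \<otimes> e (0,1)" using c p by (simp add: grp_centre_def)
        then have "(1 * sg k + j) mod 3 = (j * sg 0 + 1) mod 3"
          using comm_pairs[OF \<open>(0,1) \<in> D0\<close>, of k j] assms p by simp
        moreover have "j = 0 \<or> j = 1 \<or> j = 2" using j3 by auto
        ultimately show False using False by (auto simp: sg_def)
      qed
    qed
  next
    assume nc: "\<not> ncp p"
    then have ek: "even k" and j0: "j = 0" using p by (auto simp: ncp_def)
    show "e p \<in> grp_centre G"
      unfolding grp_centre_def
    proof (intro CollectI conjI ballI)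
      show "e p \<in> carrier G" by simp
      fix x assume "x \<in> carrier G"
      then obtain m i where q: "(m,i) \<in> D0" "x = e (m,i)" using pr by (metis prod.exhaust)
      have "e (m,i) \<otimes> e (k,j) = e (k,j) \<otimes> e (m,i)"
        using comm_pairs[OF q(1) assms[unfolded p]] ek j0 by (simp add: sg_def)
      then show "x \<otimes> e p = e p \<otimes> x" using q p by simp
    qed
  qed
qed

lemma V_char: "nc_vertices G = e ` {p \<in> D0. ncp p}"
proof -
  have "nc_vertices G = {x \<in> carrier G. x \<notin> grp_centre G}" unfolding nc_vertices_def by auto
  also have "\<dots> = e ` {p \<in> D0. ncp p}"
  proof
    show "{x \<in> carrier G. x \<notin> grp_centre G} \<subseteq> e ` {p \<in> D0. ncp p}"
    proof
      fix x assume x: "x \<in> {x \<in> carrier G. x \<notin> grp_centre G}"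
      then have "pr x \<in> D0" "e (pr x) = x" using pr by auto
      then show "x \<in> e ` {p \<in> D0. ncp p}" using centre_iff[of "pr x"] x by (metis (mono_tags, lifting) image_eqI mem_Collect_eq)
    qed
    show "e ` {p \<in> D0. ncp p} \<subseteq> {x \<in> carrier G. x \<notin> grp_centre G}"
      using centre_iff by auto
  qed
  finally show ?thesis .
qed

lemma cls_e: "p \<in> D0 \<Longrightarrow> cls (e p) = clsp p" unfolding cls_def by (simp add: pr_e)

lemma arith_cls:
  assumes "j < 3" "i < 3" "ncp (k,j)" "ncp (m,i)"
  shows "(j * sg m + i) mod 3 = (i * sg k + j) mod 3 \<longleftrightarrow> clsp (k,j) = clsp (m,i)"
proof -
  have "j = 0 \<or> j = 1 \<or> j = 2" "i = 0 \<or> i = 1 \<or> i = 2" using assms by auto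
  then show ?thesis using assms by (cases "even k"; cases "even m") (auto simp: sg_def clsp_def ncp_def)
qed

lemma comm_cls:
  assumes "x \<in> nc_vertices G" "y \<in> nc_vertices G"
  shows "x \<otimes> y = y \<otimes> x \<longleftrightarrow> cls x = cls y"
proof -
  obtain k j where p: "(k,j) \<in> D0" "ncp (k,j)" "x = e (k,j)" using assms(1) V_char by auto
  obtain m i where q: "(m,i) \<in> D0" "ncp (m,i)" "y = e (m,i)" using assms(2) V_char by auto
  have "j < 3" "i < 3" using p q by (auto simp: D0_def)
  then show ?thesis using comm_pairs[OF p(1) q(1)] arith_cls[OF _ _ p(2) q(2)] p q by (simp add: cls_e)
qed

lemma cls_lt: "x \<in> nc_vertices G \<Longrightarrow> cls x < 4"
  using V_char by (auto simp: cls_e D0_def clsp_def)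

lemma card_even: "card {k::nat. k < 2*n \<and> even k} = n"
proof -
  have "{k::nat. k < 2*n \<and> even k} = (\<lambda>i. 2*i) ` {..<n}" by (auto elim!: evenE)
  then show ?thesis by (simp add: card_image inj_on_def)
qed

lemma card_odd: "card {k::nat. k < 2*n \<and> odd k} = n"
proof -
  have "{k::nat. k < 2*n \<and> odd k} = (\<lambda>i. 2*i+1) ` {..<n}" by (auto elim!: oddE)
  then show ?thesis by (simp add: card_image inj_on_def)
qed

lemma card_cls:
  assumes "c < 4"
  shows "card {x \<in> nc_vertices G. cls x = c} = (if c = 0 then 2*n else n)"
proof -
  have "{x \<in> nc_vertices G. cls x = c} = e ` {p \<in> D0. ncp p \<and> clsp p = c}"
    unfolding V_char by (auto simp: cls_e)
  moreover have "inj_on e {p \<in> D0. ncp p \<and> clsp p = c}" using e_inj by (rule inj_on_subset) auto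
  ultimately have "card {x \<in> nc_vertices G. cls x = c} = card {p \<in> D0. ncp p \<and> clsp p = c}"
    by (simp add: card_image)
  also have "\<dots> = (if c = 0 then 2*n else n)"
  proof (cases "c = 0")
    case True
    have "{p \<in> D0. ncp p \<and> clsp p = c} = {k. k < 2*n \<and> even k} \<times> {1,2}"
      using True by (auto simp: D0_def ncp_def clsp_def)
    then show ?thesis using True card_even by (simp add: card_cartesian_product)
  next
    case False
    have "{p \<in> D0. ncp p \<and> clsp p = c} = {k. k < 2*n \<and> odd k} \<times> {c - 1}"
      using False assms by (auto simp: D0_def ncp_def clsp_def)
    then show ?thesis using False card_odd by (simp add: card_cartesian_product)
  qed
  finally show ?thesis .
qed

lemma cls_ex: "c < 4 \<Longrightarrow> \<exists>w. w \<in> nc_vertices G \<and> cls w = c"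
proof (rule ccontr)
  assume "c < 4" "\<not> (\<exists>w. w \<in> nc_vertices G \<and> cls w = c)"
  then have "{x \<in> nc_vertices G. cls x = c} = {}" by auto
  then have "card {x \<in> nc_vertices G. cls x = c} = 0" by (simp only:) simp
  then show False using card_cls[OF \<open>c < 4\<close>] n1 by (simp split: if_splits)
qed

lemma adj_iff: "x \<in> nc_vertices G \<Longrightarrow> y \<in> nc_vertices G \<Longrightarrow> nc_adj G x y \<longleftrightarrow> x \<noteq> y \<and> cls x \<noteq> cls y"
  unfolding nc_adj_def using comm_cls by auto

lemma walk1: "nc_walk G [x] \<longleftrightarrow> x \<in> nc_vertices G" unfolding nc_walk_def by auto
lemma walk2: "nc_walk G [x, y] \<longleftrightarrow> x \<in> nc_vertices G \<and> y \<in> nc_vertices G \<and> nc_adj G x y"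
  unfolding nc_walk_def by (auto simp: less_Suc_eq)
lemma walk3: "nc_adj G x w \<Longrightarrow> nc_adj G w y \<Longrightarrow> nc_walk G [x, w, y]"
  unfolding nc_walk_def
proof (intro conjI allI impI)
  assume "nc_adj G x w" "nc_adj G w y"
  then show "set [x, w, y] \<subseteq> nc_vertices G" by (auto simp: nc_adj_def)
  fix i assume "Suc i < length [x, w, y]"
  then have "i = 0 \<or> i = 1" by auto
  then show "nc_adj G ([x, w, y] ! i) ([x, w, y] ! Suc i)" using \<open>nc_adj G x w\<close> \<open>nc_adj G w y\<close> by auto
qed simp

lemma P0: "nc_walk G xs \<Longrightarrow> hd xs = u \<Longrightarrow> last xs = v \<Longrightarrow> length xs = Suc 0 \<Longrightarrow> u = v"
  by (auto simp: length_Suc_conv)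
lemma P1: "nc_walk G xs \<Longrightarrow> hd xs = u \<Longrightarrow> last xs = v \<Longrightarrow> length xs = Suc (Suc 0) \<Longrightarrow> nc_adj G u v"
  by (auto simp: length_Suc_conv walk2)

lemma dist:
  assumes x: "x \<in> nc_vertices G" and y: "y \<in> nc_vertices G"
  shows "nc_dist G x y = (if x = y then 0 else if cls x = cls y then 2 else 1)"
proof (cases "x = y")
  case True
  have "nc_walk G [x] \<and> hd [x] = x \<and> last [x] = y \<and> length [x] = Suc 0" using x True walk1 by simp
  then have "(LEAST k. \<exists>xs. nc_walk G xs \<and> hd xs = x \<and> last xs = y \<and> length xs = Suc k) = 0"
    by (intro Least_eq_0) blast
  then show ?thesis unfolding nc_dist_def using True by simp
next
  case ne: False
  show ?thesis
  proof (cases "cls x = cls y")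
    case False
    have adj: "nc_adj G x y" using adj_iff[OF x y] ne False by simp
    have "(LEAST k. \<exists>xs. nc_walk G xs \<and> hd xs = x \<and> last xs = y \<and> length xs = Suc k) = 1"
    proof (rule Least_equality)
      show "\<exists>xs. nc_walk G xs \<and> hd xs = x \<and> last xs = y \<and> length xs = Suc 1"
        using x y adj walk2 by (intro exI[of _ "[x, y]"]) simp
      fix k assume "\<exists>xs. nc_walk G xs \<and> hd xs = x \<and> last xs = y \<and> length xs = Suc k"
      then obtain xs where xs: "nc_walk G xs" "hd xs = x" "last xs = y" "length xs = Suc k" by blast
      show "1 \<le> k"
      proof (rule ccontr)
        assume "\<not> 1 \<le> k"
        then have "length xs = Suc 0" using xs(4) by simp
        then show False using P0[OF xs(1-3)] ne by blast
      qed
    qed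
    then show ?thesis unfolding nc_dist_def using ne False by simp
  next
    case True
    define c where "c = (if cls x = 0 then 1 else (0::nat))"
    have c4: "c < 4" by (simp add: c_def)
    obtain w where w: "w \<in> nc_vertices G" "cls w = c" using cls_ex[OF c4] by blast
    have cw: "cls w \<noteq> cls x" using w by (auto simp: c_def)
    have a1: "nc_adj G x w" using adj_iff[OF x w(1)] cw by auto
    have a2: "nc_adj G w y" using adj_iff[OF w(1) y] cw True by auto
    have "(LEAST k. \<exists>xs. nc_walk G xs \<and> hd xs = x \<and> last xs = y \<and> length xs = Suc k) = 2"
    proof (rule Least_equality)
      show "\<exists>xs. nc_walk G xs \<and> hd xs = x \<and> last xs = y \<and> length xs = Suc 2"
        using walk3[OF a1 a2] by (intro exI[of _ "[x, w, y]"]) simp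
      fix k assume k: "\<exists>xs. nc_walk G xs \<and> hd xs = x \<and> last xs = y \<and> length xs = Suc k"
      have na: "\<not> nc_adj G x y" using adj_iff[OF x y] True by simp
      obtain xs where xs: "nc_walk G xs" "hd xs = x" "last xs = y" "length xs = Suc k" using k by blast
      show "2 \<le> k"
      proof (rule ccontr)
        assume "\<not> 2 \<le> k"
        then have "k = 0 \<or> k = 1" by auto
        then show False
        proof
          assume "k = 0"
          then have "length xs = Suc 0" using xs(4) by simp
          then show False using P0[OF xs(1-3)] ne by blast
        next
          assume "k = 1"
          then have "length xs = Suc (Suc 0)" using xs(4) by simp
          then show False using P1[OF xs(1-3)] na by blast
        qed
      qed
    qed
    then show ?thesis unfolding nc_dist_def using ne True by simp
  qed
qed

end

lemma final_form:
  fixes k :: nat and c p q :: real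
  shows "(\<Prod>x\<in>#replicate_mset k (-2) + replicate_mset 2 c + {#p, q#}. [:- x, 1:]) =
    [:- p, 1:] * [:- q, 1:] * [:- c, 1:] ^ 2 * [:2, 1:] ^ k"
  by (simp only: image_mset_union image_replicate_mset image_mset_add_mset image_mset_empty
     prod_mset.union prod_mset_replicate_mset prod_mset.add_mset prod_mset.empty minus_minus mult_1_right mult_ac)

theorem theorem5p1:
  fixes G :: "'g monoid" and a b :: 'g and n :: nat and f :: "nat \<Rightarrow> 'g"
  assumes "group G"
    and "n \<ge> 1"
    and "a \<in> carrier G" and "b \<in> carrier G"
    and "carrier G = generate G {a, b}"
    and "a [^]\<^bsub>G\<^esub> (2 * n) = \<one>\<^bsub>G\<^esub>"
    and "b [^]\<^bsub>G\<^esub> (3::nat) = \<one>\<^bsub>G\<^esub>"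
    and "inv\<^bsub>G\<^esub> a \<otimes>\<^bsub>G\<^esub> b \<otimes>\<^bsub>G\<^esub> a = inv\<^bsub>G\<^esub> b"
    and "finite (carrier G)" and "card (carrier G) = 6 * n"
    and "bij_betw f {..<card (nc_vertices G)} (nc_vertices G)"
  shows "char_poly (nc_dist_matrix G (card (nc_vertices G)) f) =
    (\<Prod>x\<in>#replicate_mset (5 * n - 4) (-2)
          + replicate_mset 2 (real n - 2)
          + {# (4 * real n - 2) + real n * sqrt 6, (4 * real n - 2) - real n * sqrt 6 #}.
       [:- x, 1:])"
proof -
  have U: "u6n G a b n" unfolding u6n_def u6n_axioms_def using assms by auto
  define N where "N = card (nc_vertices G)"
  have bij: "bij_betw f {..<N} (nc_vertices G)" using assms(11) by (simp add: N_def)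
  have fV: "l < N \<Longrightarrow> f l \<in> nc_vertices G" for l using bij by (auto simp: bij_betw_def)
  have finj: "inj_on f {..<N}" using bij by (simp add: bij_betw_def)
  have fim: "f ` {..<N} = nc_vertices G" using bij by (simp add: bij_betw_def)
  define cl where "cl l = u6n.cls G a b n (f l)" for l
  have cl: "\<And>l. l < N \<Longrightarrow> cl l < 4" unfolding cl_def using u6n.cls_lt[OF U] fV by blast
  have szn: "card {l. l<N \<and> cl l = c} = (if c = 0 then 2*n else n)" if c: "c < 4" for c
  proof -
    have "f ` {l. l<N \<and> cl l = c} = {x \<in> nc_vertices G. u6n.cls G a b n x = c}"
      using fim unfolding cl_def by auto
    moreover have "inj_on f {l. l<N \<and> cl l = c}" using finj by (rule inj_on_subset) auto
    ultimately have "card {l. l<N \<and> cl l = c} = card {x \<in> nc_vertices G. u6n.cls G a b n x = c}"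
      by (metis card_image)
    then show ?thesis using u6n.card_cls[OF U c] by simp
  qed
  have sz: "\<And>c. c < 4 \<Longrightarrow> real (card {l. l<N \<and> cl l = c}) = (if c = 0 then 2*real n else real n)"
    using szn by simp
  have ex: "\<forall>c. \<exists>l. c < 4 \<longrightarrow> l < N \<and> cl l = c"
  proof
    fix c
    show "\<exists>l. c < 4 \<longrightarrow> l < N \<and> cl l = c"
    proof (cases "c < 4")
      case True
      obtain w where w: "w \<in> nc_vertices G" "u6n.cls G a b n w = c" using u6n.cls_ex[OF U True] by blast
      then obtain l where "l < N" "f l = w" using fim by (metis imageE lessThan_iff)
      then show ?thesis using w unfolding cl_def by blast
    qed simp
  qed
  obtain r where r: "\<forall>c. c < 4 \<longrightarrow> r c < N \<and> cl (r c) = c" using choice[OF ex] by blast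
  have mat: "nc_dist_matrix G N f = mat N N (\<lambda>(i,j). if i = j then 0 else if cl i = cl j then 2 else 1)"
    unfolding nc_dist_matrix_def
  proof (rule eq_matI)
    fix i j assume ij: "i < dim_row (mat N N (\<lambda>(i,j). if i = j then 0 else if cl i = cl j then 2 else (1::real)))"
      "j < dim_col (mat N N (\<lambda>(i,j). if i = j then 0 else if cl i = cl j then 2 else (1::real)))"
    then have i: "i < N" and j: "j < N" by auto
    have "f i = f j \<longleftrightarrow> i = j" using finj i j by (auto simp: inj_on_def)
    then show "mat N N (\<lambda>(i, j). real (nc_dist G (f i) (f j))) $$ (i, j) =
         mat N N (\<lambda>(i,j). if i = j then 0 else if cl i = cl j then 2 else (1::real)) $$ (i, j)"
      using u6n.dist[OF U fV[OF i] fV[OF j]] i j by (simp add: cl_def)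
  qed auto
  have cp: "char_poly (nc_dist_matrix G N f) =
    [:-(4*real n-2+n*sqrt 6),1:] * [:-(4*real n-2-n*sqrt 6),1:] * [:-(real n-2),1:]^2 * [:2,1:]^(N-4)"
    unfolding mat by (rule charpoly_main[OF cl _ sz assms(2)]) (use r in auto)
  have "real N = (\<Sum>l = 0..<N. (\<lambda>_. 1::real) (cl l))" by simp
  also have "\<dots> = (\<Sum>c<4. real (card {l. l<N \<and> cl l = c}) * 1)" by (rule sum_class[OF cl])
  also have "\<dots> = 5 * real n" using sz by (simp add: sum4)
  finally have N5: "N = 5 * n" by linarith
  have rhs: "(\<Prod>x\<in>#replicate_mset (5 * n - 4) (-2)
          + replicate_mset 2 (real n - 2)
          + {# (4 * real n - 2) + real n * sqrt 6, (4 * real n - 2) - real n * sqrt 6 #}.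
       [:- x, 1:]) = [:-(4*real n-2+n*sqrt 6),1:] * [:-(4*real n-2-n*sqrt 6),1:] * [:-(real n-2),1:]^2 * [:2,1:]^(N-4)"
    by (simp only: final_form N5)
  show ?thesis unfolding rhs N_def[symmetric] by (rule cp)
qed

end
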